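(* Let $G$ be a finite simple graph with $n\ge2$ vertices and let $S_n=K_{1,n-1}$. The following are equivalent: (i) $G$ is regular; (ii) $|s(\{I(S_n)\}*\{I(G)\})|=1$; (iii) $|s(\{\rho(S_n)\}*\{I(G)\})|=1$.
   Context: Take $R=\mathbb{Z}$. An $R$-weighted complete graph $K$ is a finite vertex set with a weight $v_K(e)\in R$ on every 2-subset $e$. For such $H,G'$ with equal vertex counts and a bijection $f:V(H)\to V(G')$, $H*_fG'$ has vertex set $V(H)$ and weights $v_H(\{x,y\})v_{G'}(\{f(x),f(y)\})$; $H*G'=\{H*_fG': f \text{ bijection}\}$. $s(K)=\sum_e v_K(e)$, $s(\mathscr K)=\{s(K):K\in\mathscr K\}$. For a simple graph $G$, $I(G)$ has weight $1$ on edges and $0$ on non-edges; for connected $G$, $\rho(G)$ has weight $\rho_G(x,y)$ (graph distance) on $\{x,y\}$. *)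

theory Defs
  imports Main
begin

text \<open>An integer-weighted complete graph: a vertex set together with a weight function
  on subsets; only the weights of 2-subsets of the vertex set are relevant.\<close>
type_synonym 'a wgraph = "'a set \<times> ('a set \<Rightarrow> int)"

definition two_subsets :: "'a set \<Rightarrow> 'a set set" where
  "two_subsets V = {e. e \<subseteq> V \<and> card e = 2}"

definition wsum :: "'a wgraph \<Rightarrow> int" where
  "wsum K = (\<Sum>e\<in>two_subsets (fst K). snd K e)"

definition wprod_f :: "'a wgraph \<Rightarrow> 'b wgraph \<Rightarrow> ('a \<Rightarrow> 'b) \<Rightarrow> 'a wgraph" where
  "wprod_f H G f = (fst H, \<lambda>e. snd H e * snd G (f ` e))"

definition wprod :: "'a wgraph set \<Rightarrow> 'b wgraph set \<Rightarrow> 'a wgraph set" where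
  "wprod Hs Gs = {wprod_f H G f | H G f. H \<in> Hs \<and> G \<in> Gs \<and> bij_betw f (fst H) (fst G)}"

definition simple_graph :: "'a set \<Rightarrow> ('a \<Rightarrow> 'a \<Rightarrow> bool) \<Rightarrow> bool" where
  "simple_graph V E \<longleftrightarrow> finite V \<and> (\<forall>x y. E x y \<longrightarrow> x \<in> V \<and> y \<in> V \<and> x \<noteq> y \<and> E y x)"

definition degree :: "'a set \<Rightarrow> ('a \<Rightarrow> 'a \<Rightarrow> bool) \<Rightarrow> 'a \<Rightarrow> nat" where
  "degree V E v = card {u \<in> V. E v u}"

definition regular :: "'a set \<Rightarrow> ('a \<Rightarrow> 'a \<Rightarrow> bool) \<Rightarrow> bool" where
  "regular V E \<longleftrightarrow> (\<exists>k. \<forall>v\<in>V. degree V E v = k)"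

definition Igraph :: "'a set \<Rightarrow> ('a \<Rightarrow> 'a \<Rightarrow> bool) \<Rightarrow> 'a wgraph" where
  "Igraph V E = (V, \<lambda>e. if \<exists>x y. e = {x, y} \<and> x \<noteq> y \<and> E x y then 1 else 0)"

definition walk :: "'a set \<Rightarrow> ('a \<Rightarrow> 'a \<Rightarrow> bool) \<Rightarrow> nat \<Rightarrow> 'a \<Rightarrow> 'a \<Rightarrow> bool" where
  "walk V E k x y \<longleftrightarrow> (\<exists>p. length p = Suc k \<and> hd p = x \<and> last p = y \<and> set p \<subseteq> V
       \<and> (\<forall>i<k. E (p ! i) (p ! Suc i)))"

definition connected_graph :: "'a set \<Rightarrow> ('a \<Rightarrow> 'a \<Rightarrow> bool) \<Rightarrow> bool" where
  "connected_graph V E \<longleftrightarrow> (\<forall>x\<in>V. \<forall>y\<in>V. \<exists>k. walk V E k x y)"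

definition gdist :: "'a set \<Rightarrow> ('a \<Rightarrow> 'a \<Rightarrow> bool) \<Rightarrow> 'a \<Rightarrow> 'a \<Rightarrow> nat" where
  "gdist V E x y = (LEAST k. walk V E k x y)"

text \<open>rho(G) (meaningful for connected G); the weight of {x,y} is the distance of x and y
  (this does not depend on the order, as E is symmetric).\<close>
definition rhograph :: "'a set \<Rightarrow> ('a \<Rightarrow> 'a \<Rightarrow> bool) \<Rightarrow> 'a wgraph" where
  "rhograph V E = (V, \<lambda>e. if \<exists>x y. e = {x, y} \<and> x \<noteq> y
       then int (gdist V E (SOME x. x \<in> e) (SOME y. y \<in> e \<and> y \<noteq> (SOME x. x \<in> e))) else 0)"

definition star_V :: "nat \<Rightarrow> nat set" where "star_V n = {0..<n}"
definition star_E :: "nat \<Rightarrow> nat \<Rightarrow> nat \<Rightarrow> bool" where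
  "star_E n x y \<longleftrightarrow> x < n \<and> y < n \<and> x \<noteq> y \<and> (x = 0 \<or> y = 0)"

end

theory Submission
  imports Defs "HOL-Combinatorics.Transposition"
begin

lemma two_subsets_E: "e \<in> two_subsets A \<Longrightarrow> \<exists>x y. e = {x,y} \<and> x \<noteq> y \<and> x \<in> A \<and> y \<in> A"
  unfolding two_subsets_def by (auto simp: card_2_iff)

lemma reindex_two:
  assumes f: "bij_betw f A B"
  shows "(\<Sum>e\<in>two_subsets A. a e * g (f ` e)) = (\<Sum>e'\<in>two_subsets B. a {x\<in>A. f x \<in> e'} * g e')"
proof -
  have inj: "inj_on f A" using f bij_betw_def by blast
  have pre: "{x\<in>A. f x \<in> f ` e} = e" if "e \<in> two_subsets A" for e
  proof -
    have eA: "e \<subseteq> A" using that unfolding two_subsets_def by blast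
    show ?thesis using eA inj_on_image_mem_iff[OF inj _ eA] by blast
  qed
  have bb: "bij_betw (image f) (two_subsets A) (two_subsets B)"
  proof (rule bij_betw_imageI)
    show "inj_on ((`) f) (two_subsets A)"
    proof (rule inj_onI)
      fix e1 e2 assume e1: "e1 \<in> two_subsets A" and e2: "e2 \<in> two_subsets A" and eq: "f ` e1 = f ` e2"
      have "e1 = {x\<in>A. f x \<in> f ` e1}" using pre[OF e1] by simp
      also have "\<dots> = {x\<in>A. f x \<in> f ` e2}" using eq by simp
      also have "\<dots> = e2" using pre[OF e2] by simp
      finally show "e1 = e2" .
    qed
    show "(`) f ` two_subsets A = two_subsets B"
    proof
      show "(`) f ` two_subsets A \<subseteq> two_subsets B"
      proof
        fix e2 assume "e2 \<in> (`) f ` two_subsets A"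
        then obtain e where e: "e \<in> two_subsets A" and e2: "e2 = f ` e" by blast
        have eA: "e \<subseteq> A" and c: "card e = 2" using e unfolding two_subsets_def by auto
        have "f ` e \<subseteq> B" using eA bij_betw_imp_surj_on[OF f] by blast
        moreover have "card (f ` e) = 2" using card_image[OF inj_on_subset[OF inj eA]] c by simp
        ultimately show "e2 \<in> two_subsets B" unfolding two_subsets_def e2 by blast
      qed
    next
      show "two_subsets B \<subseteq> (`) f ` two_subsets A"
      proof
        fix e' assume e': "e' \<in> two_subsets B"
        let ?e = "{x\<in>A. f x \<in> e'}"
        have "e' \<subseteq> B" using e' unfolding two_subsets_def by blast
        then have im: "f ` ?e = e'" using bij_betw_imp_surj_on[OF f] by blast
        have "card ?e = 2" using e' im card_image[OF inj_on_subset[OF inj, of ?e]]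
          unfolding two_subsets_def by auto
        then have "?e \<in> two_subsets A" unfolding two_subsets_def by auto
        then show "e' \<in> (`) f ` two_subsets A" using im by blast
      qed
    qed
  qed
  have "(\<Sum>e\<in>two_subsets A. a e * g (f ` e)) = (\<Sum>e\<in>two_subsets A. a {x\<in>A. f x \<in> f ` e} * g (f ` e))"
    by (rule sum.cong) (auto simp: pre)
  also have "\<dots> = (\<Sum>e'\<in>two_subsets B. a {x\<in>A. f x \<in> e'} * g e')"
    by (rule sum.reindex_bij_betw[OF bb, where g = "\<lambda>e'. a {x\<in>A. f x \<in> e'} * g e'"])
  finally show ?thesis .
qed

lemma pre_two:
  assumes f: "bij_betw f A B" and e': "e' \<in> two_subsets B"
  shows "{x\<in>A. f x \<in> e'} \<in> two_subsets A"
proof -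
  have inj: "inj_on f A" using f bij_betw_def by blast
  let ?e = "{x\<in>A. f x \<in> e'}"
  have "e' \<subseteq> B" using e' unfolding two_subsets_def by blast
  then have im: "f ` ?e = e'" using bij_betw_imp_surj_on[OF f] by blast
  have "card ?e = 2" using e' im card_image[OF inj_on_subset[OF inj, of ?e]]
    unfolding two_subsets_def by auto
  then show ?thesis unfolding two_subsets_def by auto
qed

lemma walk0: "walk V E 0 x y \<Longrightarrow> x = y"
  unfolding walk_def by (metis hd_conv_nth last_conv_nth length_0_conv list.size(3) diff_Suc_1 nat.distinct(1))

lemma walk1: "walk V E (Suc 0) x y \<Longrightarrow> E x y"
  unfolding walk_def
  by (metis One_nat_def diff_Suc_1 hd_conv_nth last_conv_nth lessI list.size(3) nat.distinct(1))

lemma walk_edge: "x \<in> V \<Longrightarrow> y \<in> V \<Longrightarrow> E x y \<Longrightarrow> walk V E (Suc 0) x y"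
  unfolding walk_def by (rule exI[of _ "[x,y]"]) auto

lemma walk_two: "x \<in> V \<Longrightarrow> y \<in> V \<Longrightarrow> z \<in> V \<Longrightarrow> E x z \<Longrightarrow> E z y \<Longrightarrow> walk V E 2 x y"
  unfolding walk_def
proof (rule exI[of _ "[x,z,y]"], intro conjI)
  assume "E x z" "E z y"
  show "\<forall>i<2. E ([x, z, y] ! i) ([x, z, y] ! Suc i)"
  proof (intro allI impI)
    fix i :: nat assume "i < 2"
    then have "i = 0 \<or> i = 1" by auto
    then show "E ([x, z, y] ! i) ([x, z, y] ! Suc i)" using \<open>E x z\<close> \<open>E z y\<close> by auto
  qed
qed auto

lemma gdist_star1:
  assumes "x < n" "y < n" "x \<noteq> y" "x = 0 \<or> y = 0"
  shows "gdist (star_V n) (star_E n) x y = 1"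
  unfolding gdist_def
proof (rule Least_equality)
  show "walk (star_V n) (star_E n) 1 x y"
    using walk_edge[of x "star_V n" y "star_E n"] assms by (auto simp: star_V_def star_E_def)
next
  fix m assume "walk (star_V n) (star_E n) m x y"
  then show "1 \<le> m" using walk0 assms by (cases m) (auto dest!: walk0)
qed

lemma gdist_star2:
  assumes "x < n" "y < n" "x \<noteq> y" "x \<noteq> 0" "y \<noteq> 0"
  shows "gdist (star_V n) (star_E n) x y = 2"
  unfolding gdist_def
proof (rule Least_equality)
  show "walk (star_V n) (star_E n) 2 x y"
    using walk_two[of x "star_V n" y 0 "star_E n"] assms by (auto simp: star_V_def star_E_def)
next
  fix m assume w: "walk (star_V n) (star_E n) m x y"
  show "2 \<le> m"
  proof (rule ccontr)
    assume "\<not> 2 \<le> m"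
    then have "m = 0 \<or> m = Suc 0" by auto
    then show False
    proof
      assume "m = 0" then show False using walk0[of "star_V n" "star_E n" x y] w assms by auto
    next
      assume "m = Suc 0" then have "star_E n x y" using w walk1 by metis
      then show False using assms by (auto simp: star_E_def)
    qed
  qed
qed

lemma IS_weight:
  assumes "e \<in> two_subsets {0..<n}"
  shows "snd (Igraph (star_V n) (star_E n)) e = (if 0 \<in> e then 1 else 0)"
proof -
  obtain a b where e: "e = {a,b}" "a \<noteq> b" "a < n" "b < n" using two_subsets_E[OF assms] by auto
  show ?thesis using e unfolding Igraph_def star_E_def
    by (auto simp: doubleton_eq_iff)
qed

lemma RS_weight:
  assumes "e \<in> two_subsets {0..<n}"
  shows "snd (rhograph (star_V n) (star_E n)) e = (if 0 \<in> e then 1 else 2)"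
proof -
  obtain a b where e: "e = {a,b}" "a \<noteq> b" "a < n" "b < n" using two_subsets_E[OF assms] by auto
  define u where "u = (SOME x. x \<in> e)"
  define w where "w = (SOME y. y \<in> e \<and> y \<noteq> u)"
  have u: "u \<in> e" unfolding u_def using e by (metis insertI1 someI)
  have "\<exists>y. y \<in> e \<and> y \<noteq> u" using e u by auto
  then have w: "w \<in> e \<and> w \<noteq> u" unfolding w_def by (rule someI_ex)
  have ew: "e = {u, w}" using e u w by auto
  have un: "u < n" "w < n" using u w e by auto
  have "snd (rhograph (star_V n) (star_E n)) e = int (gdist (star_V n) (star_E n) u w)"
  proof -
    have ex: "\<exists>x y. e = {x, y} \<and> x \<noteq> y" using e by blast
    show ?thesis unfolding rhograph_def u_def w_def using ex by simp
  qed
  also have "\<dots> = (if 0 \<in> e then 1 else 2)"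
    using gdist_star1[of u n w] gdist_star2[of u n w] un w ew by auto
  finally show ?thesis .
qed

definition IGw :: "'a set \<Rightarrow> ('a \<Rightarrow> 'a \<Rightarrow> bool) \<Rightarrow> 'a set \<Rightarrow> int" where
  "IGw V E = snd (Igraph V E)"

definition Dv :: "'a set \<Rightarrow> ('a \<Rightarrow> 'a \<Rightarrow> bool) \<Rightarrow> 'a \<Rightarrow> int" where
  "Dv V E v = (\<Sum>e\<in>two_subsets V. if v \<in> e then IGw V E e else 0)"

definition Mv :: "'a set \<Rightarrow> ('a \<Rightarrow> 'a \<Rightarrow> bool) \<Rightarrow> int" where
  "Mv V E = (\<Sum>e\<in>two_subsets V. IGw V E e)"

lemma finite_two: "finite V \<Longrightarrow> finite (two_subsets V)"
  unfolding two_subsets_def by (rule finite_subset[of _ "Pow V"]) auto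

lemma sum_IS:
  assumes f: "bij_betw f {0..<card V} V" and n: "card V \<ge> 2"
  shows "wsum (wprod_f (Igraph (star_V (card V)) (star_E (card V))) (Igraph V E) f) = Dv V E (f 0)"
proof -
  let ?A = "{0..<card V}"
  have z: "0 \<in> ?A" using n by auto
  have "wsum (wprod_f (Igraph (star_V (card V)) (star_E (card V))) (Igraph V E) f)
      = (\<Sum>e\<in>two_subsets ?A. snd (Igraph (star_V (card V)) (star_E (card V))) e * IGw V E (f ` e))"
    unfolding wsum_def wprod_f_def IGw_def by (simp add: Igraph_def star_V_def)
  also have "\<dots> = (\<Sum>e'\<in>two_subsets V. snd (Igraph (star_V (card V)) (star_E (card V))) {x\<in>?A. f x \<in> e'} * IGw V E e')"
    by (rule reindex_two[OF f])
  also have "\<dots> = Dv V E (f 0)"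
    unfolding Dv_def
  proof (rule sum.cong[OF refl])
    fix e' assume e': "e' \<in> two_subsets V"
    have p: "{x\<in>?A. f x \<in> e'} \<in> two_subsets ?A" by (rule pre_two[OF f e'])
    have "(0 \<in> {x\<in>?A. f x \<in> e'}) = (f 0 \<in> e')" using z by simp
    then show "snd (Igraph (star_V (card V)) (star_E (card V))) {x\<in>?A. f x \<in> e'} * IGw V E e' =
        (if f 0 \<in> e' then IGw V E e' else 0)"
      using IS_weight[OF p] by simp
  qed
  finally show ?thesis .
qed

lemma sum_RS:
  assumes f: "bij_betw f {0..<card V} V" and n: "card V \<ge> 2"
  shows "wsum (wprod_f (rhograph (star_V (card V)) (star_E (card V))) (Igraph V E) f) = 2 * Mv V E - Dv V E (f 0)"
proof -
  let ?A = "{0..<card V}"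
  have z: "0 \<in> ?A" using n by auto
  have "wsum (wprod_f (rhograph (star_V (card V)) (star_E (card V))) (Igraph V E) f)
      = (\<Sum>e\<in>two_subsets ?A. snd (rhograph (star_V (card V)) (star_E (card V))) e * IGw V E (f ` e))"
    unfolding wsum_def wprod_f_def IGw_def by (simp add: rhograph_def star_V_def)
  also have "\<dots> = (\<Sum>e'\<in>two_subsets V. snd (rhograph (star_V (card V)) (star_E (card V))) {x\<in>?A. f x \<in> e'} * IGw V E e')"
    by (rule reindex_two[OF f])
  also have "\<dots> = (\<Sum>e'\<in>two_subsets V. 2 * IGw V E e' - (if f 0 \<in> e' then IGw V E e' else 0))"
  proof (rule sum.cong[OF refl])
    fix e' assume e': "e' \<in> two_subsets V"
    have p: "{x\<in>?A. f x \<in> e'} \<in> two_subsets ?A" by (rule pre_two[OF f e'])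
    have "(0 \<in> {x\<in>?A. f x \<in> e'}) = (f 0 \<in> e')" using z by simp
    then show "snd (rhograph (star_V (card V)) (star_E (card V))) {x\<in>?A. f x \<in> e'} * IGw V E e' =
        2 * IGw V E e' - (if f 0 \<in> e' then IGw V E e' else 0)"
      using RS_weight[OF p] by simp
  qed
  also have "\<dots> = 2 * Mv V E - Dv V E (f 0)"
    unfolding Mv_def Dv_def by (simp add: sum_subtractf sum_distrib_left)
  finally show ?thesis .
qed

lemma Dv_degree:
  assumes g: "simple_graph V E" and v: "v \<in> V"
  shows "Dv V E v = int (degree V E v)"
proof -
  have fin: "finite V" using g simple_graph_def by blast
  define P where "P e \<longleftrightarrow> (\<exists>x y. e = {x, y} \<and> x \<noteq> y \<and> E x y)" for e
  have IG: "IGw V E e = (if P e then 1 else 0)" for e unfolding IGw_def Igraph_def P_def by simp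
  have "Dv V E v = (\<Sum>e\<in>two_subsets V. if v \<in> e \<and> P e then 1 else 0)"
    unfolding Dv_def IG by (rule sum.cong) auto
  also have "\<dots> = (\<Sum>e\<in>{e\<in>two_subsets V. v \<in> e \<and> P e}. 1)"
    by (rule sum.inter_filter[symmetric]) (rule finite_two[OF fin])
  also have "\<dots> = int (card {e\<in>two_subsets V. v \<in> e \<and> P e})" by simp
  also have "{e\<in>two_subsets V. v \<in> e \<and> P e} = (\<lambda>u. {v,u}) ` {u\<in>V. E v u}"
  proof
    show "{e\<in>two_subsets V. v \<in> e \<and> P e} \<subseteq> (\<lambda>u. {v,u}) ` {u\<in>V. E v u}"
    proof
      fix e assume "e \<in> {e\<in>two_subsets V. v \<in> e \<and> P e}"
      then have ve: "v \<in> e" and Pe: "P e" and eV: "e \<subseteq> V" unfolding two_subsets_def by auto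
      obtain x y where xy: "e = {x,y}" "x \<noteq> y" "E x y" using Pe P_def by blast
      have sym: "E y x" using xy g simple_graph_def by metis
      have yV: "y \<in> V" "x \<in> V" using xy eV by auto
      show "e \<in> (\<lambda>u. {v,u}) ` {u\<in>V. E v u}"
      proof (cases "v = x")
        case True then show ?thesis using xy yV by auto
      next
        case False then have "v = y" using ve xy by auto
        then show ?thesis using xy yV sym by (auto simp: insert_commute)
      qed
    qed
  next
    show "(\<lambda>u. {v,u}) ` {u\<in>V. E v u} \<subseteq> {e\<in>two_subsets V. v \<in> e \<and> P e}"
    proof
      fix e assume "e \<in> (\<lambda>u. {v,u}) ` {u\<in>V. E v u}"
      then obtain u where u: "u \<in> V" "E v u" "e = {v,u}" by blast
      have "v \<noteq> u" using u g simple_graph_def by metis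
      then show "e \<in> {e\<in>two_subsets V. v \<in> e \<and> P e}"
        using u v unfolding two_subsets_def P_def by auto
    qed
  qed
  also have "card ((\<lambda>u. {v,u}) ` {u\<in>V. E v u}) = card {u\<in>V. E v u}"
  proof (rule card_image)
    show "inj_on (\<lambda>u. {v,u}) {u\<in>V. E v u}"
    proof (rule inj_onI)
      fix a b assume a: "a \<in> {u\<in>V. E v u}" and b: "b \<in> {u\<in>V. E v u}" and eq: "{v,a} = {v,b}"
      have "a \<noteq> v" "b \<noteq> v" using a b g simple_graph_def by (metis mem_Collect_eq)+
      then show "a = b" using eq by (metis doubleton_eq_iff)
    qed
  qed
  finally show ?thesis unfolding degree_def by simp
qed

lemma card_img_one:
  assumes "inj \<phi>" "V \<noteq> {}"
  shows "card ((\<lambda>v. \<phi> (d v)) ` V) = 1 \<longleftrightarrow> (\<exists>k. \<forall>v\<in>V. d v = k)"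
proof
  assume "card ((\<lambda>v. \<phi> (d v)) ` V) = 1"
  then obtain x where x: "(\<lambda>v. \<phi> (d v)) ` V = {x}" using card_1_singleton_iff by (metis One_nat_def)
  obtain v0 where v0: "v0 \<in> V" using assms by blast
  have "\<forall>v\<in>V. d v = d v0"
  proof
    fix v assume "v \<in> V"
    then have "\<phi> (d v) = x" using x by (metis image_eqI singletonD)
    moreover have "\<phi> (d v0) = x" using x v0 by (metis image_eqI singletonD)
    ultimately have "\<phi> (d v) = \<phi> (d v0)" by simp
    then show "d v = d v0" using assms(1) by (simp add: inj_eq)
  qed
  then show "\<exists>k. \<forall>v\<in>V. d v = k" by blast
next
  assume "\<exists>k. \<forall>v\<in>V. d v = k"
  then obtain k where "\<forall>v\<in>V. d v = k" by blast
  then have "(\<lambda>v. \<phi> (d v)) ` V = {\<phi> k}" using assms(2) by auto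
  then show "card ((\<lambda>v. \<phi> (d v)) ` V) = 1" by simp
qed

lemma bij_with_zero:
  assumes fin: "finite V" and n: "card V \<ge> 2" and v: "v \<in> V"
  shows "\<exists>f. bij_betw f {0..<card V} V \<and> f 0 = v"
proof -
  obtain h where h: "bij_betw h {0..<card V} V" using ex_bij_betw_nat_finite[OF fin] by blast
  define k where "k = inv_into {0..<card V} h v"
  have vi: "v \<in> h ` {0..<card V}" using h v by (simp add: bij_betw_def)
  have k: "k \<in> {0..<card V}" "h k = v" unfolding k_def
    using inv_into_into[OF vi] f_inv_into_f[OF vi] by auto
  have z: "(0::nat) \<in> {0..<card V}" using n by auto
  have t: "bij_betw (transpose 0 k) {0..<card V} {0..<card V}"
    by (rule bij_betw_transpose_iff) (use k z in blast)
  have "bij_betw (h \<circ> transpose 0 k) {0..<card V} V" by (rule bij_betw_trans[OF t h])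
  moreover have "(h \<circ> transpose 0 k) 0 = v" using k by simp
  ultimately show ?thesis by blast
qed

lemma image_eq:
  assumes g: "simple_graph V E" and n: "card V \<ge> 2"
    and w: "\<And>f. bij_betw f {0..<card V} V \<Longrightarrow> wsum (wprod_f S (Igraph V E) f) = \<phi> (Dv V E (f 0))"
    and S: "fst S = {0..<card V}"
  shows "wsum ` wprod {S} {Igraph V E} = (\<lambda>v. \<phi> (Dv V E v)) ` V"
proof
  have fin: "finite V" using g simple_graph_def by blast
  show "wsum ` wprod {S} {Igraph V E} \<subseteq> (\<lambda>v. \<phi> (Dv V E v)) ` V"
  proof
    fix x assume "x \<in> wsum ` wprod {S} {Igraph V E}"
    then obtain f where f: "bij_betw f {0..<card V} V" and x: "x = wsum (wprod_f S (Igraph V E) f)"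
      unfolding wprod_def using S by (auto simp: Igraph_def)
    have "f 0 \<in> V" using f n bij_betw_apply by fastforce
    then show "x \<in> (\<lambda>v. \<phi> (Dv V E v)) ` V" using w[OF f] x by blast
  qed
next
  have fin: "finite V" using g simple_graph_def by blast
  show "(\<lambda>v. \<phi> (Dv V E v)) ` V \<subseteq> wsum ` wprod {S} {Igraph V E}"
  proof
    fix x assume "x \<in> (\<lambda>v. \<phi> (Dv V E v)) ` V"
    then obtain v where v: "v \<in> V" "x = \<phi> (Dv V E v)" by blast
    obtain f where f: "bij_betw f {0..<card V} V" "f 0 = v" using bij_with_zero[OF fin n v(1)] by blast
    have "\<exists>H G g. wprod_f S (Igraph V E) f = wprod_f H G g \<and> H \<in> {S} \<and> G \<in> {Igraph V E} \<and> bij_betw g (fst H) (fst G)"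
    proof (intro exI conjI)
      show "bij_betw f (fst S) (fst (Igraph V E))" using f S by (simp add: Igraph_def)
    qed auto
    then have "wprod_f S (Igraph V E) f \<in> wprod {S} {Igraph V E}"
      unfolding wprod_def by blast
    then show "x \<in> wsum ` wprod {S} {Igraph V E}" using w[OF f(1)] f v by force
  qed
qed

lemma reg_Dv:
  assumes g: "simple_graph V E"
  shows "regular V E \<longleftrightarrow> (\<exists>k. \<forall>v\<in>V. Dv V E v = k)"
proof
  assume "regular V E"
  then obtain k where "\<forall>v\<in>V. degree V E v = k" unfolding regular_def by blast
  then have "\<forall>v\<in>V. Dv V E v = int k" using Dv_degree[OF g] by simp
  then show "\<exists>k. \<forall>v\<in>V. Dv V E v = k" by blast
next
  assume "\<exists>k. \<forall>v\<in>V. Dv V E v = k"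
  then obtain k where "\<forall>v\<in>V. Dv V E v = k" by blast
  then have "\<forall>v\<in>V. degree V E v = nat k" using Dv_degree[OF g] by (metis nat_int)
  then show "regular V E" unfolding regular_def by blast
qed

theorem mainTheorem17:
  fixes V :: "'a set" and E :: "'a \<Rightarrow> 'a \<Rightarrow> bool"
  assumes "simple_graph V E" and "card V \<ge> 2"
  shows "(regular V E \<longleftrightarrow>
            card (wsum ` wprod {Igraph (star_V (card V)) (star_E (card V))} {Igraph V E}) = 1)
       \<and> (regular V E \<longleftrightarrow>
            card (wsum ` wprod {rhograph (star_V (card V)) (star_E (card V))} {Igraph V E}) = 1)"
proof
  have ne: "V \<noteq> {}" using assms(2) by auto
  have i1: "wsum ` wprod {Igraph (star_V (card V)) (star_E (card V))} {Igraph V E} = (\<lambda>v. id (Dv V E v)) ` V"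
    apply (rule image_eq[OF assms])
     apply (simp add: sum_IS[OF _ assms(2)])
    apply (simp add: Igraph_def star_V_def)
    done
  show "regular V E \<longleftrightarrow>
            card (wsum ` wprod {Igraph (star_V (card V)) (star_E (card V))} {Igraph V E}) = 1"
    unfolding i1 card_img_one[OF inj_on_id ne] reg_Dv[OF assms(1)] ..
  have inj: "inj (\<lambda>x. 2 * Mv V E - x)" by (rule injI) simp
  have i2: "wsum ` wprod {rhograph (star_V (card V)) (star_E (card V))} {Igraph V E} = (\<lambda>v. (\<lambda>x. 2 * Mv V E - x) (Dv V E v)) ` V"
    apply (rule image_eq[OF assms])
     apply (simp add: sum_RS[OF _ assms(2)])
    apply (simp add: rhograph_def star_V_def)
    done
  show "regular V E \<longleftrightarrow>
            card (wsum ` wprod {rhograph (star_V (card V)) (star_E (card V))} {Igraph V E}) = 1"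
    unfolding i2 card_img_one[OF inj ne] reg_Dv[OF assms(1)] ..
qed

end
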